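(* Let $G$ be a finite transitive permutation group and let $H,K\le G$ be subgroups such that $H\cup K$ is an intersecting set. Then $HK=\{hk: h\in H, k\in K\}$ is also an intersecting set.
   Context: For a permutation group $G$ on a finite set $V$, a subset $\mathcal{F}\subseteq G$ is intersecting if for all $g,h\in\mathcal{F}$ there is $v\in V$ with $g(v)=h(v)$. *)

theory Defs
  imports "HOL-Combinatorics.Permutations"
begin

definition perm_group :: "'a set \<Rightarrow> ('a \<Rightarrow> 'a) set \<Rightarrow> bool" where
  "perm_group V G \<longleftrightarrow> (\<forall>g\<in>G. g permutes V) \<and> id \<in> G \<and>
     (\<forall>g\<in>G. \<forall>h\<in>G. g \<circ> h \<in> G) \<and> (\<forall>g\<in>G. inv g \<in> G)"

definition perm_subgroup :: "('a \<Rightarrow> 'a) set \<Rightarrow> ('a \<Rightarrow> 'a) set \<Rightarrow> bool" where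
  "perm_subgroup H G \<longleftrightarrow> H \<subseteq> G \<and> id \<in> H \<and>
     (\<forall>g\<in>H. \<forall>h\<in>H. g \<circ> h \<in> H) \<and> (\<forall>g\<in>H. inv g \<in> H)"

definition transitive_on :: "'a set \<Rightarrow> ('a \<Rightarrow> 'a) set \<Rightarrow> bool" where
  "transitive_on V G \<longleftrightarrow> (\<forall>v\<in>V. \<forall>w\<in>V. \<exists>g\<in>G. g v = w)"

definition intersecting :: "'a set \<Rightarrow> ('a \<Rightarrow> 'a) set \<Rightarrow> bool" where
  "intersecting V F \<longleftrightarrow> (\<forall>g\<in>F. \<forall>h\<in>F. \<exists>v\<in>V. g v = h v)"

definition set_prod :: "('a \<Rightarrow> 'a) set \<Rightarrow> ('a \<Rightarrow> 'a) set \<Rightarrow> ('a \<Rightarrow> 'a) set" where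
  "set_prod H K = {h \<circ> k | h k. h \<in> H \<and> k \<in> K}"

end

theory Submission
  imports Defs
begin

theorem lemma5p1:
  fixes V :: "'a set" and G H K :: "('a \<Rightarrow> 'a) set"
  assumes "finite V"
    and "perm_group V G"
    and "transitive_on V G"
    and "perm_subgroup H G"
    and "perm_subgroup K G"
    and "intersecting V (H \<union> K)"
  shows "intersecting V (set_prod H K)"
  unfolding intersecting_def
proof (intro ballI)
  fix f g assume f: "f \<in> set_prod H K" and g: "g \<in> set_prod H K"
  obtain h1 k1 where f': "f = h1 \<circ> k1" "h1 \<in> H" "k1 \<in> K" using f unfolding set_prod_def by blast
  obtain h2 k2 where g': "g = h2 \<circ> k2" "h2 \<in> H" "k2 \<in> K" using g unfolding set_prod_def by blast
  have permG: "\<And>x. x \<in> G \<Longrightarrow> x permutes V" using assms(2) unfolding perm_group_def by blast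
  have HG: "H \<subseteq> G" and KG: "K \<subseteq> G" using assms(4,5) unfolding perm_subgroup_def by auto
  have hp: "inv h1 \<circ> h2 \<in> H" using assms(4) f'(2) g'(2) unfolding perm_subgroup_def by blast
  have kp: "k1 \<circ> inv k2 \<in> K" using assms(5) f'(3) g'(3) unfolding perm_subgroup_def by blast
  obtain w where w: "w \<in> V" "(k1 \<circ> inv k2) w = (inv h1 \<circ> h2) w"
    using assms(6) hp kp unfolding intersecting_def by (metis UnI1 UnI2)
  have ph1: "h1 permutes V" using permG HG f'(2) by blast
  have pk2: "k2 permutes V" using permG KG g'(3) by blast
  have e1: "h1 (inv h1 x) = x" for x using ph1 by (simp add: permutes_inverses(1))
  have e2: "k2 (inv k2 x) = x" for x using pk2 by (simp add: permutes_inverses(1))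
  have vV: "inv k2 w \<in> V" using w(1) pk2 by (simp add: permutes_inv permutes_in_image)
  have "h1 (k1 (inv k2 w)) = h2 (k2 (inv k2 w))"
    using w(2) e1 e2 by (metis comp_apply)
  then show "\<exists>v\<in>V. f v = g v" using vV f'(1) g'(1) by auto
qed

end
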